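(* Let $\mathcal W$ be countable, $\ell:\mathcal W\times\mathsf Z\to\mathbb R$ a loss, $Q$ a probability distribution on $\mathcal W$ and $\gamma>0$. Let $\mu$ be a distribution on $\mathsf Z$ such that $\ell(w,Z)$, $Z\sim\mu$, is $\sigma^2$-subgaussian for every $w\in\mathcal W$, and let $\widehat w(\mu)\in\mathcal W$ achieve the minimum of $L_\mu$ over $\mathcal W$. Then $$\mathrm{risk}(\mu,P^{\gamma,Q}_{W|S})\le\inf_{w\in\mathcal W}L_\mu(w)+\frac1\gamma D(\delta_{\widehat w(\mu)}\|Q)+\frac{\gamma\sigma^2}{2n}.$$
   Context: $S=(Z_1,\dots,Z_n)$ i.i.d. from $\mu$; $L_\mu(w)=\mathbb E_{Z\sim\mu}\ell(w,Z)$, $L_s(w)=\frac1n\sum_i\ell(w,z_i)$ for $s=(z_1,\dots,z_n)$. The Gibbs posterior is $P^{\gamma,Q}_{W|S=s}(\mathrm dw)=e^{-\gamma L_s(w)}Q(\mathrm dw)/\mathbb E[e^{-\gamma L_s(\widetilde W)}]$, $\widetilde W\sim Q$. $\mathrm{risk}(\mu,P_{W|S})=\mathbb E[L_\mu(W)]$ under $\mu^{\otimes n}P_{W|S}$. A real random variable $X$ is $\sigma^2$-subgaussian if $\mathbb E[e^{\lambda(X-\mathbb EX)}]\le e^{\lambda^2\sigma^2/2}$ for all $\lambda\in\mathbb R$. $\delta_w$ is the Dirac measure at $w$ and $D$ is relative entropy, so $D(\delta_{\widehat w}\|Q)=\log(1/Q(\widehat w))$. *)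

theory Defs
  imports "HOL-Probability.Probability"
begin

text \<open>Integrability of the exponential moments is required, so that the Bochner
  integral really is the moment generating function.\<close>
definition subgaussian :: "'a measure \<Rightarrow> ('a \<Rightarrow> real) \<Rightarrow> real \<Rightarrow> bool" where
  "subgaussian M X \<sigma>sq \<longleftrightarrow>
     X \<in> borel_measurable M \<and> integrable M X \<and>
     (\<forall>t::real. integrable M (\<lambda>z. exp (t * (X z - (\<integral>x. X x \<partial>M)))) \<and>
        (\<integral>z. exp (t * (X z - (\<integral>x. X x \<partial>M))) \<partial>M) \<le> exp (t^2 * \<sigma>sq / 2))"

definition pop_loss :: "'z measure \<Rightarrow> ('w \<Rightarrow> 'z \<Rightarrow> real) \<Rightarrow> 'w \<Rightarrow> real" where
  "pop_loss \<mu> loss w = (\<integral>z. loss w z \<partial>\<mu>)"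

definition emp_loss :: "nat \<Rightarrow> ('w \<Rightarrow> 'z \<Rightarrow> real) \<Rightarrow> (nat \<Rightarrow> 'z) \<Rightarrow> 'w \<Rightarrow> real" where
  "emp_loss n loss s w = (\<Sum>i<n. loss w (s i)) / real n"

definition gibbs_posterior :: "real \<Rightarrow> 'w pmf \<Rightarrow> ('w \<Rightarrow> real) \<Rightarrow> 'w measure" where
  "gibbs_posterior \<gamma> Q Ls =
     density (measure_pmf Q)
       (\<lambda>w. ennreal (exp (- \<gamma> * Ls w) / (\<integral>w'. exp (- \<gamma> * Ls w') \<partial>measure_pmf Q)))"

definition gibbs_risk :: "nat \<Rightarrow> 'z measure \<Rightarrow> ('w \<Rightarrow> 'z \<Rightarrow> real) \<Rightarrow> real \<Rightarrow> 'w pmf \<Rightarrow> real" where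
  "gibbs_risk n \<mu> loss \<gamma> Q =
     (\<integral>s. (\<integral>w. pop_loss \<mu> loss w \<partial>gibbs_posterior \<gamma> Q (emp_loss n loss s))
        \<partial>PiM {..<n} (\<lambda>_. \<mu>))"

text \<open>D(delta_w || Q) = log(1/Q(w)), which is +infinity when Q(w) = 0.\<close>
definition KL_dirac :: "'w pmf \<Rightarrow> 'w \<Rightarrow> ereal" where
  "KL_dirac Q w = (if pmf Q w = 0 then \<infinity> else ereal (ln (1 / pmf Q w)))"

end

theory Submission imports Defs begin

lemma meas_pmf_any: "(f::'w::countable \<Rightarrow> 'b) \<in> measurable (measure_pmf Q) (N::'b measure) \<longleftrightarrow> f \<in> UNIV \<rightarrow> space N"
  by (simp add: measurable_cong_sets[OF refl sets_measure_pmf_count_space] measurable_count_space_eq1)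

lemma borel_pmf[measurable]: "(f::'w::countable \<Rightarrow> 'b::topological_space) \<in> borel_measurable (measure_pmf Q)"
  by (simp add: meas_pmf_any)

lemma meas_pair_pmf:
  fixes h :: "'a \<Rightarrow> 'w::countable \<Rightarrow> 'b"
  assumes "\<And>w. (\<lambda>x. h x w) \<in> measurable M N"
  shows "(\<lambda>p. h (fst p) (snd p)) \<in> measurable (M \<Otimes>\<^sub>M measure_pmf Q) N"
proof -
  have s: "snd \<in> measurable (M \<Otimes>\<^sub>M measure_pmf Q) (count_space UNIV)"
    using measurable_snd[of M "measure_pmf Q"]
    by (simp add: measurable_cong_sets[OF refl sets_measure_pmf_count_space])
  have "\<And>w. (\<lambda>p. h (fst p) w) \<in> measurable (M \<Otimes>\<^sub>M measure_pmf Q) N"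
    using measurable_compose[OF measurable_fst assms] by auto
  from measurable_compose_countable[where f="\<lambda>w p. h (fst p) w", OF this s] show ?thesis .
qed

lemma mgf_bound:
  fixes loss :: "'w \<Rightarrow> 'z \<Rightarrow> real" and \<mu> :: "'z measure"
  assumes n: "n \<ge> 1" and P: "prob_space \<mu>"
    and sg: "subgaussian \<mu> (loss w) (\<sigma>^2)"
  shows "(\<integral>\<^sup>+ s. ennreal (exp (\<gamma> * (pop_loss \<mu> loss w - emp_loss n loss s w))) \<partial>PiM {..<n} (\<lambda>_. \<mu>))
    \<le> ennreal (exp (\<gamma>^2 * \<sigma>^2 / (2 * real n)))"
proof -
  interpret product_prob_space "\<lambda>_. \<mu>" "{..<n}"
    by (simp add: product_prob_space_def product_prob_space_axioms_def product_sigma_finite_def P prob_space_imp_sigma_finite)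
  define t where "t = - \<gamma> / real n"
  define L where "L = pop_loss \<mu> loss w"
  have meas[measurable]: "loss w \<in> borel_measurable \<mu>" using sg by (simp add: subgaussian_def)
  have one: "(\<integral>\<^sup>+ z. ennreal (exp (t * (loss w z - L))) \<partial>\<mu>) \<le> ennreal (exp (t^2 * \<sigma>^2 / 2))"
  proof -
    have i: "integrable \<mu> (\<lambda>z. exp (t * (loss w z - L)))" and b: "(\<integral>z. exp (t * (loss w z - L)) \<partial>\<mu>) \<le> exp (t^2 * \<sigma>^2 / 2)"
      using sg by (auto simp: subgaussian_def L_def pop_loss_def)
    have "(\<integral>\<^sup>+ z. ennreal (exp (t * (loss w z - L))) \<partial>\<mu>) = ennreal (\<integral>z. exp (t * (loss w z - L)) \<partial>\<mu>)"
      by (rule nn_integral_eq_integral[OF i]) auto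
    with b show ?thesis by (simp add: ennreal_leI)
  qed
  have eq: "\<And>s. exp (\<gamma> * (L - emp_loss n loss s w)) = (\<Prod>i\<in>{..<n}. exp (t * (loss w (s i) - L)))"
  proof -
    fix s
    have "\<gamma> * (L - emp_loss n loss s w) = (\<Sum>i\<in>{..<n}. t * (loss w (s i) - L))"
    proof -
      have "(\<Sum>i\<in>{..<n}. t * (loss w (s i) - L)) = t * (\<Sum>i<n. loss w (s i)) - real n * t * L"
        by (simp add: sum_subtractf sum_distrib_left[symmetric] right_diff_distrib)
      also have "\<dots> = \<gamma> * (L - emp_loss n loss s w)"
        using n by (simp add: emp_loss_def t_def field_simps)
      finally show ?thesis by simp
    qed
    then show "exp (\<gamma> * (L - emp_loss n loss s w)) = (\<Prod>i\<in>{..<n}. exp (t * (loss w (s i) - L)))"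
      by (simp add: exp_sum)
  qed
  have "(\<integral>\<^sup>+ s. ennreal (exp (\<gamma> * (L - emp_loss n loss s w))) \<partial>PiM {..<n} (\<lambda>_. \<mu>))
      = (\<integral>\<^sup>+ s. (\<Prod>i\<in>{..<n}. ennreal (exp (t * (loss w (s i) - L)))) \<partial>PiM {..<n} (\<lambda>_. \<mu>))"
    by (simp add: eq prod_ennreal)
  also have "\<dots> = (\<Prod>i\<in>{..<n}. \<integral>\<^sup>+ z. ennreal (exp (t * (loss w z - L))) \<partial>\<mu>)"
    by (rule product_nn_integral_prod) auto
  also have "\<dots> \<le> (\<Prod>i\<in>{..<n}. ennreal (exp (t^2 * \<sigma>^2 / 2)))"
    using one by (simp add: power_mono)
  also have "\<dots> = ennreal (exp (t^2 * \<sigma>^2 / 2) ^ n)"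
    by (simp add: ennreal_power)
  also have "exp (t^2 * \<sigma>^2 / 2) ^ n = exp (\<gamma>^2 * \<sigma>^2 / (2 * real n))"
    using n by (simp add: exp_of_nat_mult[symmetric] t_def power2_eq_square field_simps)
  finally show ?thesis by (simp add: L_def)
qed


lemma gibbs_pointwise:
  fixes Q :: "'w::countable pmf" and Ls Lm :: "'w \<Rightarrow> real"
  assumes g0: "\<gamma> > 0" and cle: "\<And>w. c \<le> Lm w" and q: "pmf Q wh > 0"
   and fZ: "(\<integral>\<^sup>+ w. ennreal (exp (- \<gamma> * Ls w)) \<partial>Q) \<noteq> \<infinity>"
   and fN: "(\<integral>\<^sup>+ w. ennreal (exp (\<gamma> * (Lm w - Ls w))) \<partial>Q) \<noteq> \<infinity>"
  shows "c \<le> (\<integral>w. Lm w \<partial>gibbs_posterior \<gamma> Q Ls)"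
   and "0 < (\<integral>w. exp (\<gamma> * (Lm w - Ls w)) \<partial>Q)"
   and "\<gamma> * (\<integral>w. Lm w \<partial>gibbs_posterior \<gamma> Q Ls)
          \<le> ln (\<integral>w. exp (\<gamma> * (Lm w - Ls w)) \<partial>Q) - ln (pmf Q wh) + \<gamma> * Ls wh"
proof -
  define Z where "Z = (\<integral>w. exp (- \<gamma> * Ls w) \<partial>Q)"
  define N where "N = (\<integral>w. exp (\<gamma> * (Lm w - Ls w)) \<partial>Q)"
  define g where "g w = exp (- \<gamma> * Ls w) / Z" for w
  define F where "F = (\<integral>w. Lm w \<partial>gibbs_posterior \<gamma> Q Ls)"
  have iZ: "integrable Q (\<lambda>w. exp (- \<gamma> * Ls w))"
    by (rule integrableI_bounded) (use fZ in \<open>auto simp: top.not_eq_extremum\<close>)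
  have iN: "integrable Q (\<lambda>w. exp (\<gamma> * (Lm w - Ls w)))"
    by (rule integrableI_bounded) (use fN in \<open>auto simp: top.not_eq_extremum\<close>)
  have Zge: "Z \<ge> pmf Q wh * exp (- \<gamma> * Ls wh)"
  proof -
    have "(\<integral>w. indicator {wh} w * exp (- \<gamma> * Ls wh) \<partial>Q) \<le> Z"
      unfolding Z_def
      by (rule integral_mono) (use iZ in \<open>auto simp: indicator_def intro!: measure_pmf.integrable_const_bound[where B=1]\<close>)
    moreover have "(\<integral>w. indicator {wh} w * exp (- \<gamma> * Ls wh) \<partial>Q) = pmf Q wh * exp (- \<gamma> * Ls wh)"
      by (simp add: measure_pmf_single)
    ultimately show ?thesis by simp
  qed
  have Zpos: "Z > 0"
    using Zge q by (smt (verit) exp_gt_zero mult_pos_pos)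
  have gnn: "g w \<ge> 0" for w unfolding g_def using Zpos by simp
  have gp: "gibbs_posterior \<gamma> Q Ls = density Q (\<lambda>w. ennreal (g w))"
    unfolding gibbs_posterior_def g_def Z_def ..
  have F_eq: "F = (\<integral>w. g w * Lm w \<partial>Q)"
    unfolding F_def gp
    by (subst integral_density) (auto simp: gnn)
  have ig: "integrable Q g" unfolding g_def using iZ by simp
  have ig1: "(\<integral>w. g w \<partial>Q) = 1" unfolding g_def using Zpos by (simp add: Z_def)
  have gexp: "g w * exp (\<gamma> * Lm w) = exp (\<gamma> * (Lm w - Ls w)) / Z" for w
    unfolding g_def by (simp add: mult_exp_exp right_diff_distrib)
  have igE: "integrable Q (\<lambda>w. g w * exp (\<gamma> * Lm w))" unfolding gexp using iN by simp
  have iEN: "(\<integral>w. g w * exp (\<gamma> * Lm w) \<partial>Q) = N / Z" unfolding gexp N_def by simp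
  have bnd: "\<bar>Lm w\<bar> \<le> \<bar>c\<bar> + exp (- \<gamma> * c) / \<gamma> * exp (\<gamma> * Lm w)" for w
  proof -
    have "\<gamma> * (Lm w - c) \<le> exp (\<gamma> * (Lm w - c))" by (smt (verit) exp_ge_add_one_self)
    hence "Lm w - c \<le> exp (\<gamma> * (Lm w - c)) / \<gamma>" using g0 by (simp add: field_simps)
    moreover have "exp (\<gamma> * (Lm w - c)) = exp (- \<gamma> * c) * exp (\<gamma> * Lm w)"
      by (simp add: mult_exp_exp right_diff_distrib)
    ultimately show ?thesis using cle[of w] by (smt (verit) times_divide_eq_left)
  qed
  have igL: "integrable Q (\<lambda>w. g w * Lm w)"
  proof (rule Bochner_Integration.integrable_bound)
    show "integrable Q (\<lambda>w. \<bar>c\<bar> * g w + exp (- \<gamma> * c) / \<gamma> * (g w * exp (\<gamma> * Lm w)))"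
      using ig igE by simp
    show "AE w in Q. norm (g w * Lm w) \<le> norm (\<bar>c\<bar> * g w + exp (- \<gamma> * c) / \<gamma> * (g w * exp (\<gamma> * Lm w)))"
    proof (intro AE_I2)
      fix w
      have "norm (g w * Lm w) = g w * \<bar>Lm w\<bar>" using gnn[of w] by (simp add: abs_mult)
      also have "\<dots> \<le> g w * (\<bar>c\<bar> + exp (- \<gamma> * c) / \<gamma> * exp (\<gamma> * Lm w))"
        by (rule mult_left_mono[OF bnd gnn])
      also have "\<dots> \<le> norm (\<bar>c\<bar> * g w + exp (- \<gamma> * c) / \<gamma> * (g w * exp (\<gamma> * Lm w)))"
        using gnn[of w] g0 by (simp add: algebra_simps)
      finally show "norm (g w * Lm w) \<le> norm (\<bar>c\<bar> * g w + exp (- \<gamma> * c) / \<gamma> * (g w * exp (\<gamma> * Lm w)))" .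
    qed
  qed simp
  show "c \<le> F"
  proof -
    have "(\<integral>w. g w * c \<partial>Q) \<le> (\<integral>w. g w * Lm w \<partial>Q)"
      by (rule integral_mono) (use ig igL gnn cle in \<open>auto intro: mult_left_mono\<close>)
    thus ?thesis using ig1 F_eq by simp
  qed
  have jen: "exp (\<gamma> * F) \<le> N / Z"
  proof -
    have "(\<integral>w. (exp (\<gamma> * F) * (1 - \<gamma> * F)) * g w + (exp (\<gamma> * F) * \<gamma>) * (g w * Lm w) \<partial>Q)
          \<le> (\<integral>w. g w * exp (\<gamma> * Lm w) \<partial>Q)"
    proof (rule integral_mono)
      show "integrable Q (\<lambda>w. (exp (\<gamma> * F) * (1 - \<gamma> * F)) * g w + (exp (\<gamma> * F) * \<gamma>) * (g w * Lm w))"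
        using ig igL by simp
      show "integrable Q (\<lambda>w. g w * exp (\<gamma> * Lm w))" by (rule igE)
      fix w
      have "exp (\<gamma> * F) * (1 + (\<gamma> * Lm w - \<gamma> * F)) \<le> exp (\<gamma> * F) * exp (\<gamma> * Lm w - \<gamma> * F)"
        by (rule mult_left_mono) (auto intro: exp_ge_add_one_self)
      also have "\<dots> = exp (\<gamma> * Lm w)" by (simp add: mult_exp_exp)
      finally have "g w * (exp (\<gamma> * F) * (1 + (\<gamma> * Lm w - \<gamma> * F))) \<le> g w * exp (\<gamma> * Lm w)"
        by (rule mult_left_mono[OF _ gnn])
      thus "(exp (\<gamma> * F) * (1 - \<gamma> * F)) * g w + (exp (\<gamma> * F) * \<gamma>) * (g w * Lm w) \<le> g w * exp (\<gamma> * Lm w)"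
        by (simp add: algebra_simps)
    qed
    moreover have "(\<integral>w. (exp (\<gamma> * F) * (1 - \<gamma> * F)) * g w + (exp (\<gamma> * F) * \<gamma>) * (g w * Lm w) \<partial>Q) = exp (\<gamma> * F)"
    proof -
      have "(\<integral>w. (exp (\<gamma> * F) * (1 - \<gamma> * F)) * g w + (exp (\<gamma> * F) * \<gamma>) * (g w * Lm w) \<partial>Q)
         = (exp (\<gamma> * F) * (1 - \<gamma> * F)) * (\<integral>w. g w \<partial>Q) + (exp (\<gamma> * F) * \<gamma>) * (\<integral>w. g w * Lm w \<partial>Q)"
        using ig igL by (simp del: integral_mult_right_zero add: integral_mult_right)
      also have "\<dots> = exp (\<gamma> * F)" unfolding ig1 F_eq[symmetric] by (simp add: algebra_simps)
      finally show ?thesis .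
    qed
    ultimately show ?thesis using iEN by simp
  qed
  have Npos: "N > 0" using jen Zpos by (smt (verit) divide_nonpos_pos exp_gt_zero)
  thus "0 < (\<integral>w. exp (\<gamma> * (Lm w - Ls w)) \<partial>Q)" unfolding N_def .
  have "\<gamma> * F \<le> ln (N / Z)" using ln_le_cancel_iff[of "exp (\<gamma> * F)" "N / Z"] jen Npos Zpos by simp
  also have "\<dots> = ln N - ln Z" using Npos Zpos by (simp add: ln_div)
  also have "ln Z \<ge> ln (pmf Q wh) - \<gamma> * Ls wh"
  proof -
    have "ln (pmf Q wh * exp (- \<gamma> * Ls wh)) \<le> ln Z" using Zge q by (intro ln_mono) auto
    thus ?thesis using q by (simp add: ln_mult)
  qed
  hence "ln N - ln Z \<le> ln N - ln (pmf Q wh) + \<gamma> * Ls wh" by simp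
  finally show "\<gamma> * F \<le> ln N - ln (pmf Q wh) + \<gamma> * Ls wh" .
qed


theorem proposition3:
  fixes loss :: "'w::countable \<Rightarrow> 'z \<Rightarrow> real"
    and Q :: "'w pmf" and \<mu> :: "'z measure"
    and \<gamma> \<sigma> :: real and n :: nat and w_hat :: 'w
  assumes "n \<ge> 1"
    and "\<gamma> > 0"
    and "prob_space \<mu>"
    and "\<And>w. subgaussian \<mu> (loss w) (\<sigma>^2)"
    and "\<And>w. pop_loss \<mu> loss w_hat \<le> pop_loss \<mu> loss w"
  shows "ereal (gibbs_risk n \<mu> loss \<gamma> Q)
     \<le> ereal (INF w. pop_loss \<mu> loss w) + KL_dirac Q w_hat / ereal \<gamma>
        + ereal (\<gamma> * \<sigma>^2 / (2 * real n))"
proof -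
  note n = assms(1) and g0 = assms(2) and P = assms(3) and sg = assms(4) and mn = assms(5)
  define c where "c = pop_loss \<mu> loss w_hat"
  define K where "K = \<gamma>^2 * \<sigma>^2 / (2 * real n)"
  have Minf: "(INF w. pop_loss \<mu> loss w) = c"
    unfolding c_def by (rule antisym) (auto intro!: cINF_greatest cINF_lower bdd_belowI[where m="pop_loss \<mu> loss w_hat"] mn)
  show ?thesis
  proof (cases "pmf Q w_hat = 0")
    case True
    then show ?thesis using g0 by (simp add: KL_dirac_def)
  next
    case False
    hence q: "pmf Q w_hat > 0" by (simp add: order_less_le)
    have main: "gibbs_risk n \<mu> loss \<gamma> Q \<le> c + ln (1 / pmf Q w_hat) / \<gamma> + K / \<gamma>"
    proof -
      define M where "M = PiM {..<n} (\<lambda>_. \<mu>)"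
      define Lm where "Lm w = pop_loss \<mu> loss w" for w
      define Ls where "Ls s w = emp_loss n loss s w" for s w
      interpret PP: product_prob_space "\<lambda>_. \<mu>" "{..<n}"
        by (simp add: product_prob_space_def product_prob_space_axioms_def product_sigma_finite_def P prob_space_imp_sigma_finite)
      have pM: "prob_space M" unfolding M_def by (rule prob_space_PiM) (rule P)
      interpret PM: prob_space M by (rule pM)
      have sfQ: "sigma_finite_measure (measure_pmf Q)"
        by (simp add: prob_space_imp_sigma_finite prob_space_measure_pmf)
      interpret PS: pair_sigma_finite M "measure_pmf Q"
        by (simp add: pair_sigma_finite_def sfQ pM prob_space_imp_sigma_finite)
      have mloss[measurable]: "\<And>w. loss w \<in> borel_measurable \<mu>" using sg by (simp add: subgaussian_def)
      have mLs[measurable]: "\<And>w. (\<lambda>s. Ls s w) \<in> borel_measurable M"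
        unfolding Ls_def emp_loss_def M_def by measurable
      have mp: "case_prod h \<in> borel_measurable (M \<Otimes>\<^sub>M measure_pmf Q)"
        if "\<And>w. (\<lambda>s. h s w) \<in> borel_measurable M" for h :: "_ \<Rightarrow> 'w \<Rightarrow> real"
        using meas_pair_pmf[of h M borel Q, OF that] by (simp add: split_beta')
      have mpe: "case_prod h \<in> borel_measurable (M \<Otimes>\<^sub>M measure_pmf Q)"
        if "\<And>w. (\<lambda>s. h s w) \<in> borel_measurable M" for h :: "_ \<Rightarrow> 'w \<Rightarrow> ennreal"
        using meas_pair_pmf[of h M borel Q, OF that] by (simp add: split_beta')
      define E where "E s = (\<integral>\<^sup>+ w. ennreal (exp (\<gamma> * (Lm w - Ls s w))) \<partial>Q)" for s
      define Zn where "Zn s = (\<integral>\<^sup>+ w. ennreal (exp (- \<gamma> * Ls s w)) \<partial>Q)" for s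
      have mE: "E \<in> borel_measurable M" unfolding E_def
        by (rule sigma_finite_measure.borel_measurable_nn_integral[OF sfQ], rule mpe) measurable
      have mZn: "Zn \<in> borel_measurable M" unfolding Zn_def
        by (rule sigma_finite_measure.borel_measurable_nn_integral[OF sfQ], rule mpe) measurable
      have b1: "(\<integral>\<^sup>+ s. E s \<partial>M) \<le> ennreal (exp K)"
      proof -
        have "(\<integral>\<^sup>+ s. E s \<partial>M) = (\<integral>\<^sup>+ w. (\<integral>\<^sup>+ s. ennreal (exp (\<gamma> * (Lm w - Ls s w))) \<partial>M) \<partial>Q)"
          unfolding E_def by (rule PS.Fubini'[symmetric], rule mpe) measurable
        also have "\<dots> \<le> (\<integral>\<^sup>+ w. ennreal (exp K) \<partial>Q)"
          by (rule nn_integral_mono) (simp add: M_def Lm_def Ls_def K_def mgf_bound[OF n P sg])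
        also have "\<dots> = ennreal (exp K)" by simp
        finally show ?thesis .
      qed
      have b2: "(\<integral>\<^sup>+ s. Zn s \<partial>M) \<le> ennreal (exp (- \<gamma> * c)) * ennreal (exp K)"
      proof -
        have "Zn s \<le> ennreal (exp (- \<gamma> * c)) * E s" for s
        proof -
          have "Zn s \<le> (\<integral>\<^sup>+ w. ennreal (exp (- \<gamma> * c)) * ennreal (exp (\<gamma> * (Lm w - Ls s w))) \<partial>Q)"
            unfolding Zn_def
          proof (rule nn_integral_mono)
            fix w
            have "exp (- \<gamma> * Ls s w) = exp (- \<gamma> * Lm w) * exp (\<gamma> * (Lm w - Ls s w))"
              by (simp add: mult_exp_exp algebra_simps)
            also have "\<dots> \<le> exp (- \<gamma> * c) * exp (\<gamma> * (Lm w - Ls s w))"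
              using mn[of w] g0 by (intro mult_right_mono) (auto simp: c_def Lm_def)
            finally show "ennreal (exp (- \<gamma> * Ls s w)) \<le> ennreal (exp (- \<gamma> * c)) * ennreal (exp (\<gamma> * (Lm w - Ls s w)))"
              by (simp add: ennreal_mult[symmetric] ennreal_leI)
          qed
          also have "\<dots> = ennreal (exp (- \<gamma> * c)) * E s"
            unfolding E_def by (rule nn_integral_cmult) simp
          finally show ?thesis .
        qed
        hence "(\<integral>\<^sup>+ s. Zn s \<partial>M) \<le> (\<integral>\<^sup>+ s. ennreal (exp (- \<gamma> * c)) * E s \<partial>M)"
          by (intro nn_integral_mono) auto
        also have "\<dots> = ennreal (exp (- \<gamma> * c)) * (\<integral>\<^sup>+ s. E s \<partial>M)"
          by (rule nn_integral_cmult) (rule mE)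
        also have "\<dots> \<le> ennreal (exp (- \<gamma> * c)) * ennreal (exp K)"
          by (rule mult_left_mono[OF b1]) simp
        finally show ?thesis .
      qed
      have AE1: "AE s in M. E s \<noteq> \<infinity>"
        by (rule nn_integral_PInf_AE[OF mE]) (use b1 in \<open>auto simp: top_unique\<close>)
      have AE2: "AE s in M. Zn s \<noteq> \<infinity>"
        by (rule nn_integral_PInf_AE[OF mZn]) (use b2 in \<open>auto simp: top_unique ennreal_mult[symmetric]\<close>)
      define Nr where "Nr s = (\<integral>w. exp (\<gamma> * (Lm w - Ls s w)) \<partial>Q)" for s
      define Zr where "Zr s = (\<integral>w. exp (- \<gamma> * Ls s w) \<partial>Q)" for s
      define F where "F s = (\<integral>w. Lm w \<partial>gibbs_posterior \<gamma> Q (Ls s))" for s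
      have mNr: "Nr \<in> borel_measurable M" unfolding Nr_def
        by (rule sigma_finite_measure.borel_measurable_lebesgue_integral[OF sfQ], rule mp) measurable
      have mZr[measurable]: "Zr \<in> borel_measurable M" unfolding Zr_def
        by (rule sigma_finite_measure.borel_measurable_lebesgue_integral[OF sfQ], rule mp) measurable
      have Zr0: "Zr s \<ge> 0" for s unfolding Zr_def by (rule integral_nonneg_AE) simp
      have Feq: "F s = (\<integral>w. (exp (- \<gamma> * Ls s w) / Zr s) * Lm w \<partial>Q)" for s
      proof -
        have "gibbs_posterior \<gamma> Q (Ls s) = density Q (\<lambda>w. ennreal (exp (- \<gamma> * Ls s w) / Zr s))"
          unfolding gibbs_posterior_def Zr_def ..
        thus ?thesis unfolding F_def by (simp add: integral_density Zr0)
      qed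
      have mF: "F \<in> borel_measurable M"
        unfolding Feq[abs_def]
        by (rule sigma_finite_measure.borel_measurable_lebesgue_integral[OF sfQ], rule mp) measurable
      have Nr0: "Nr s \<ge> 0" for s unfolding Nr_def by (rule integral_nonneg_AE) simp
      have NrE: "ennreal (Nr s) \<le> E s" for s
      proof (cases "integrable Q (\<lambda>w. exp (\<gamma> * (Lm w - Ls s w)))")
        case True
        then show ?thesis unfolding Nr_def E_def by (subst nn_integral_eq_integral) auto
      next
        case False
        then show ?thesis unfolding Nr_def E_def by (simp add: not_integrable_integral_eq)
      qed
      have nnNr: "(\<integral>\<^sup>+ s. ennreal (Nr s) \<partial>M) \<le> ennreal (exp K)"
        using nn_integral_mono[of M "\<lambda>s. ennreal (Nr s)" E, OF NrE] b1 by simp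
      have iNr: "integrable M Nr"
        by (rule integrableI_bounded[OF mNr]) (use nnNr Nr0 in \<open>auto simp: top.not_eq_extremum intro: le_less_trans\<close>)
      have intNr: "(\<integral>s. Nr s \<partial>M) \<le> exp K"
      proof -
        have "ennreal (\<integral>s. Nr s \<partial>M) \<le> ennreal (exp K)"
          using nnNr by (subst (asm) nn_integral_eq_integral[OF iNr]) (auto simp: Nr0)
        thus ?thesis by (simp add: ennreal_le_iff)
      qed
      have iL: "integrable M (\<lambda>s. loss w_hat (s i))" and intL: "(\<integral>s. loss w_hat (s i) \<partial>M) = c"
        if i: "i \<in> {..<n}" for i
      proof -
        have d: "distr M \<mu> (\<lambda>s. s i) = \<mu>" unfolding M_def using PP.PiM_component[OF i] by simp
        have il: "integrable \<mu> (loss w_hat)" using sg[of w_hat] by (simp add: subgaussian_def)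
        show "integrable M (\<lambda>s. loss w_hat (s i))"
          using il integrable_distr_eq[of "\<lambda>s. s i" M \<mu> "loss w_hat"] d i
          by (simp add: M_def)
        show "(\<integral>s. loss w_hat (s i) \<partial>M) = c"
          using integral_distr[of "\<lambda>s. s i" M \<mu> "loss w_hat"] d i
          by (simp add: M_def c_def pop_loss_def)
      qed
      have iLs: "integrable M (\<lambda>s. Ls s w_hat)"
        unfolding Ls_def emp_loss_def using iL by (auto intro!: Bochner_Integration.integrable_sum integrable_divide_zero)
      have intLs: "(\<integral>s. Ls s w_hat \<partial>M) = c"
        unfolding Ls_def emp_loss_def using iL intL n
        by (simp add: Bochner_Integration.integral_sum)
      define G where "G s = (Nr s * exp (- K) - 1 + K - ln (pmf Q w_hat) + \<gamma> * Ls s w_hat) / \<gamma>" for s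
      have iG: "integrable M G" unfolding G_def using iNr iLs by simp
      have intG: "(\<integral>s. G s \<partial>M) \<le> c + ln (1 / pmf Q w_hat) / \<gamma> + K / \<gamma>"
      proof -
        have "(\<integral>s. G s \<partial>M) = ((\<integral>s. Nr s \<partial>M) * exp (- K) - 1 + K - ln (pmf Q w_hat) + \<gamma> * c) / \<gamma>"
          unfolding G_def using iNr iLs intLs pM
          by (simp add: PM.prob_space Bochner_Integration.integral_add Bochner_Integration.integral_diff)
        also have "\<dots> \<le> (exp K * exp (- K) - 1 + K - ln (pmf Q w_hat) + \<gamma> * c) / \<gamma>"
          using intNr g0 by (intro divide_right_mono) auto
        also have "\<dots> = c + ln (1 / pmf Q w_hat) / \<gamma> + K / \<gamma>"
          using g0 q by (simp add: mult_exp_exp ln_div field_simps)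
        finally show ?thesis .
      qed
      have AEb: "AE s in M. c \<le> F s \<and> F s \<le> G s"
        using AE1 AE2
      proof eventually_elim
        case (elim s)
        have cle: "\<And>w. c \<le> Lm w" by (simp add: c_def Lm_def mn)
        note gp = gibbs_pointwise[OF g0 cle q, of "Ls s"]
        have h1: "c \<le> F s" unfolding F_def using gp elim by (simp add: E_def Zn_def)
        have h2: "\<gamma> * F s \<le> ln (Nr s) - ln (pmf Q w_hat) + \<gamma> * Ls s w_hat"
          and Np: "0 < Nr s"
          unfolding F_def Nr_def using gp elim by (simp_all add: E_def Zn_def)
        have "ln (Nr s) \<le> Nr s * exp (- K) - 1 + K"
        proof -
          have "ln (Nr s * exp (- K)) \<le> Nr s * exp (- K) - 1" using Np by (intro ln_le_minus_one) simp
          thus ?thesis using Np by (simp add: ln_mult)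
        qed
        with h2 have "\<gamma> * F s \<le> \<gamma> * G s" unfolding G_def using g0 by simp
        with g0 have "F s \<le> G s" by simp
        with h1 show ?case by simp
      qed
      have iF: "integrable M F"
      proof (rule Bochner_Integration.integrable_bound[of M "\<lambda>s. \<bar>c\<bar> + \<bar>G s\<bar>"])
        show "integrable M (\<lambda>s. \<bar>c\<bar> + \<bar>G s\<bar>)" using iG pM by simp
        show "F \<in> borel_measurable M" by (rule mF)
        show "AE s in M. norm (F s) \<le> norm (\<bar>c\<bar> + \<bar>G s\<bar>)"
          using AEb by eventually_elim auto
      qed
      have "gibbs_risk n \<mu> loss \<gamma> Q = (\<integral>s. F s \<partial>M)"
        unfolding gibbs_risk_def F_def M_def Lm_def Ls_def by simp
      also have "\<dots> \<le> (\<integral>s. G s \<partial>M)"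
        by (rule integral_mono_AE[OF iF iG]) (use AEb in auto)
      also have "\<dots> \<le> c + ln (1 / pmf Q w_hat) / \<gamma> + K / \<gamma>" by (rule intG)
      finally show ?thesis .
    qed
    have "K / \<gamma> = \<gamma> * \<sigma>^2 / (2 * real n)" using g0 by (simp add: K_def power2_eq_square)
    then show ?thesis using False Minf main g0 by (simp add: KL_dirac_def)
  qed
qed

end
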